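(* Let $n\geq1$ and $\Delta:=\rho_n^{n+1}\in M_n$. Then: (1) $\rho_1(\rho_n\rho_1)^{n-1}=\rho_n^{\,n}$, and hence $\Delta=(\rho_1\rho_n)^n=(\rho_n\rho_1)^n$. (2) For $1\leq i\leq n$, setting $a_i:=\rho_n^{\,i}(\rho_1\rho_n)^{n-i}$, one has $\rho_ia_i=a_i\rho_i=\Delta$; in particular each generator $\rho_i$ is both a left- and a right-divisor of $\Delta$, and $\Delta$ is central in $M_n$. (3) For all $a,b\in M_n$, if $ab=\Delta$ then $ba=\Delta$.
   Context: $M_n$ denotes the monoid with generators $\rho_1,\dots,\rho_n$ and relations $\rho_1\rho_n\rho_i=\rho_{i+1}\rho_n$ for $1\leq i\leq n-1$. *)

theory Defs
  imports Main
begin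

text \<open>The monoid M_n is presented by generators rho_1,...,rho_n (encoded as the
natural numbers 1..n) and relations rho_1 rho_n rho_i = rho_(i+1) rho_n for 1 <= i <= n-1.
Elements of M_n are represented by words (lists over {1..n}) modulo the congruence
generated by the relations.\<close>

definition words :: "nat \<Rightarrow> nat list set" where
  "words n = lists {1..n}"

inductive Mrel :: "nat \<Rightarrow> nat list \<Rightarrow> nat list \<Rightarrow> bool" for n where
  rel: "1 \<le> i \<Longrightarrow> i \<le> n - 1 \<Longrightarrow> Mrel n [1, n, i] [Suc i, n]"

inductive Meq :: "nat \<Rightarrow> nat list \<Rightarrow> nat list \<Rightarrow> bool" for n where
  refl: "Meq n u u"
| sym: "Meq n u v \<Longrightarrow> Meq n v u"
| trans: "Meq n u v \<Longrightarrow> Meq n v w \<Longrightarrow> Meq n u w"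
| step: "Mrel n l r \<Longrightarrow> Meq n (u @ l @ w) (u @ r @ w)"

definition wpow :: "nat list \<Rightarrow> nat \<Rightarrow> nat list" where
  "wpow w k = concat (replicate k w)"

definition Delta :: "nat \<Rightarrow> nat list" where
  "Delta n = wpow [n] (n + 1)"

definition a_word :: "nat \<Rightarrow> nat \<Rightarrow> nat list" where
  "a_word n i = wpow [n] i @ wpow [1, n] (n - i)"

end

theory Submission
  imports Defs
begin


lemma Meq_ctx: "Meq n u v \<Longrightarrow> Meq n (p @ u @ q) (p @ v @ q)"
proof (induction rule: Meq.induct)
  case (refl u) show ?case by (rule Meq.refl)
next
  case (sym u v) show ?case by (rule Meq.sym[OF sym.IH])
next
  case (trans u v w) then show ?case by (metis Meq.trans)
next
  case (step l r u w)
  have "Meq n ((p @ u) @ l @ (w @ q)) ((p @ u) @ r @ (w @ q))" by (rule Meq.step[OF step])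
  then show ?case by simp
qed

lemma Meq_app: "Meq n u u' \<Longrightarrow> Meq n v v' \<Longrightarrow> Meq n (u @ v) (u' @ v')"
proof -
  assume a: "Meq n u u'" "Meq n v v'"
  have "Meq n ([] @ u @ v) ([] @ u' @ v)" by (rule Meq_ctx[OF a(1)])
  moreover have "Meq n (u' @ v @ []) (u' @ v' @ [])" by (rule Meq_ctx[OF a(2)])
  ultimately show ?thesis using Meq.trans by simp
qed

lemma Meq_rel: "1 \<le> i \<Longrightarrow> i \<le> n - 1 \<Longrightarrow> Meq n (p @ [1, n, i] @ q) (p @ [Suc i, n] @ q)"
  by (rule Meq.step, rule Mrel.rel)

lemma wpow_Suc: "wpow w (Suc k) = w @ wpow w k" by (simp add: wpow_def)
lemma wpow_Suc2: "wpow w (Suc k) = wpow w k @ w" by (simp add: wpow_def replicate_append_same[symmetric])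
lemma wpow_add: "wpow w (a + b) = wpow w a @ wpow w b" by (simp add: wpow_def replicate_add)
lemma wpow_single: "wpow [c] k = replicate k c" by (induction k) (auto simp: wpow_def)
lemma wpow_0[simp]: "wpow w 0 = []" by (simp add: wpow_def)
lemma wpow_rot: "[a] @ wpow [b, a] k = wpow [a, b] k @ [a]"
  by (induction k) (auto simp: wpow_Suc wpow_Suc2)

lemma Lmain: "1 \<le> j \<Longrightarrow> j + k \<le> n \<Longrightarrow> Meq n (wpow [1,n] k @ [j]) ([j+k] @ wpow [n] k)"
proof (induction k)
  case 0 then show ?case by (simp add: Meq.refl)
next
  case (Suc k)
  have "Meq n ([1,n] @ (wpow [1,n] k @ [j]) @ []) ([1,n] @ ([j+k] @ wpow [n] k) @ [])"
    using Suc by (intro Meq_ctx) auto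
  moreover have "Meq n ([] @ [1,n,j+k] @ wpow [n] k) ([] @ [Suc (j+k), n] @ wpow [n] k)"
    using Suc by (intro Meq_rel) auto
  ultimately show ?case by (auto simp: wpow_Suc intro: Meq.trans)
qed

lemma Lone: "1 \<le> i \<Longrightarrow> i \<le> n \<Longrightarrow> Meq n ([i] @ wpow [n] (i - 1)) (wpow [1,n] (i - 1) @ [1])"
  using Lmain[of 1 "i - 1" n] by (auto intro: Meq.sym)

lemma wpow_pred: "0 < k \<Longrightarrow> wpow w k = wpow w (k - 1) @ w"
  by (cases k) (auto simp: wpow_Suc2)
lemma wpow_pred': "0 < k \<Longrightarrow> wpow w k = w @ wpow w (k - 1)"
  by (cases k) (auto simp: wpow_Suc)

lemma R0: "1 \<le> i \<Longrightarrow> i \<le> n \<Longrightarrow> Meq n ([i] @ wpow [n] i) (wpow [1,n] i)"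
proof -
  assume a: "1 \<le> i" "i \<le> n"
  have e: "wpow [n] i = wpow [n] (i - 1) @ [n]" "wpow [1,n] i = wpow [1,n] (i - 1) @ [1,n]"
    using a by (simp_all add: wpow_pred)
  have "Meq n (([i] @ wpow [n] (i - 1)) @ [n]) ((wpow [1,n] (i - 1) @ [1]) @ [n])"
    by (rule Meq_app[OF Lone[OF a] Meq.refl])
  then show ?thesis using e by simp
qed

lemma R1: "1 \<le> i \<Longrightarrow> 1 \<le> j \<Longrightarrow> i + j \<le> n \<Longrightarrow>
  Meq n ([i] @ wpow [n] i @ [j]) ([i+j] @ wpow [n] i)"
proof -
  assume a: "1 \<le> i" "1 \<le> j" "i + j \<le> n"
  have ai: "i \<le> n" "j + i \<le> n" using a by auto
  have 1: "Meq n (([i] @ wpow [n] i) @ [j]) (wpow [1,n] i @ [j])"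
    by (rule Meq_app[OF R0[OF a(1) ai(1)] Meq.refl])
  have 2: "Meq n (wpow [1,n] i @ [j]) ([j+i] @ wpow [n] i)" by (rule Lmain[OF a(2) ai(2)])
  show ?thesis using Meq.trans[OF 1 2] by (simp add: add.commute)
qed

lemma R2: "1 \<le> i \<Longrightarrow> i < n \<Longrightarrow> j < n \<Longrightarrow> n < i + j \<Longrightarrow>
  Meq n ([i] @ wpow [n] i @ [j]) ([i+j-n] @ wpow [n] (Suc i))"
proof -
  assume a: "1 \<le> i" "i < n" "j < n" "n < i + j"
  define s where "s = i + j - n"
  have s: "1 \<le> s" "s \<le> n" "i = s + (n - j)" "Suc i = s + Suc (n - j)" using a by (auto simp: s_def)
  have ai: "i \<le> n" "1 \<le> j" "j + (n - j) \<le> n" using a by auto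
  have 1: "Meq n (([i] @ wpow [n] i) @ [j]) (wpow [1,n] i @ [j])"
    by (rule Meq_app[OF R0[OF a(1) ai(1)] Meq.refl])
  have 2: "wpow [1,n] i @ [j] = wpow [1,n] s @ (wpow [1,n] (n-j) @ [j])"
    using s by (simp add: wpow_add)
  have 3: "Meq n (wpow [1,n] s @ (wpow [1,n] (n-j) @ [j])) (wpow [1,n] s @ ([j + (n-j)] @ wpow [n] (n-j)))"
    by (rule Meq_app[OF Meq.refl Lmain[OF ai(2,3)]])
  have 4: "wpow [1,n] s @ ([j + (n-j)] @ wpow [n] (n-j)) = wpow [1,n] s @ wpow [n] (Suc (n - j))"
    using a by (simp add: wpow_Suc)
  have 5: "Meq n (([s] @ wpow [n] s) @ wpow [n] (Suc (n - j))) (wpow [1,n] s @ wpow [n] (Suc (n - j)))"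
    by (rule Meq_app[OF R0[OF s(1,2)] Meq.refl])
  have 6: "[s] @ wpow [n] (Suc i) = ([s] @ wpow [n] s) @ wpow [n] (Suc (n - j))"
    using s by (simp add: wpow_add[symmetric])
  have 7: "Meq n ([i] @ wpow [n] i @ [j]) (wpow [1,n] s @ wpow [n] (Suc (n - j)))"
    using Meq.trans[OF 1[unfolded 2] 3[unfolded 4]] by simp
  have "Meq n ([i] @ wpow [n] i @ [j]) ([s] @ wpow [n] (Suc i))"
    unfolding 6 by (rule Meq.trans[OF 7 Meq.sym[OF 5]])
  then show ?thesis unfolding s_def .
qed

lemma part1: "1 \<le> n \<Longrightarrow> Meq n ([1] @ wpow [n, 1] (n - 1)) (wpow [n] n)"
proof -
  assume a: "1 \<le> n"
  have 1: "[1] @ wpow [n, 1] (n - 1) = wpow [1,n] (n-1) @ [1]" by (rule wpow_rot)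
  have 2: "Meq n (wpow [1,n] (n-1) @ [1]) ([1 + (n-1)] @ wpow [n] (n-1))" using a by (intro Lmain[of 1 "n-1" n]) auto
  have 3: "[1 + (n-1)] @ wpow [n] (n-1) = wpow [n] n" using a by (simp add: wpow_pred')
  show ?thesis using 2 unfolding 1 3 .
qed

lemma Delta_eq: "Delta n = [n] @ wpow [n] n" by (simp add: Delta_def wpow_Suc)

lemma part1b: "1 \<le> n \<Longrightarrow> Meq n (Delta n) (wpow [1, n] n)"
proof -
  assume a: "1 \<le> n"
  have 1: "Delta n = ([n] @ wpow [n] (n - 1)) @ [n]" using a
    by (simp add: Delta_def wpow_Suc wpow_pred[of n "[n]"])
  have 2: "Meq n (([n] @ wpow [n] (n - 1)) @ [n]) ((wpow [1,n] (n - 1) @ [1]) @ [n])"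
    by (rule Meq_app[OF Lone[OF a order_refl] Meq.refl])
  have 3: "(wpow [1,n] (n - 1) @ [1]) @ [n] = wpow [1,n] n" using a
    using wpow_pred[of n "[1,n]"] by simp
  show ?thesis using 2 unfolding 1 3 .
qed

lemma part1c: "1 \<le> n \<Longrightarrow> Meq n (Delta n) (wpow [n, 1] n)"
proof -
  assume a: "1 \<le> n"
  have p: "Meq n (wpow [n] n) ([1] @ wpow [n, 1] (n - 1))" by (rule Meq.sym[OF part1[OF a]])
  have 1: "Meq n ([n] @ wpow [n] n @ []) ([n] @ ([1] @ wpow [n, 1] (n - 1)) @ [])"
    by (rule Meq_ctx[OF p])
  have 2: "[n] @ ([1] @ wpow [n, 1] (n - 1)) @ [] = wpow [n,1] n"
    using wpow_pred'[of n "[n,1]"] a by simp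
  have 3: "[n] @ wpow [n] n @ [] = Delta n" by (simp add: Delta_eq)
  show ?thesis using 1 unfolding 2 3 .
qed

lemma part2a: "1 \<le> i \<Longrightarrow> i \<le> n \<Longrightarrow> Meq n ([i] @ a_word n i) (Delta n)"
proof -
  assume a: "1 \<le> i" "i \<le> n"
  have 1: "[i] @ a_word n i = ([i] @ wpow [n] i) @ wpow [1,n] (n - i)" by (simp add: a_word_def)
  have 2: "Meq n (([i] @ wpow [n] i) @ wpow [1,n] (n - i)) (wpow [1,n] i @ wpow [1,n] (n - i))"
    by (rule Meq_app[OF R0[OF a] Meq.refl])
  have ee: "i + (n - i) = n" using a by simp
  have 3: "wpow [1,n] i @ wpow [1,n] (n - i) = wpow [1,n] n" using wpow_add[of "[1,n]" i "n-i"] unfolding ee by simp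
  have n1: "1 \<le> n" using a by simp
  have 4: "Meq n (wpow [1,n] n) (Delta n)" by (rule Meq.sym[OF part1b[OF n1]])
  show ?thesis unfolding 1 using Meq.trans[OF 2[unfolded 3] 4] .
qed

lemma part2b: "1 \<le> i \<Longrightarrow> i \<le> n \<Longrightarrow> Meq n (a_word n i @ [i]) (Delta n)"
proof -
  assume a: "1 \<le> i" "i \<le> n"
  have 1: "a_word n i @ [i] = wpow [n] i @ (wpow [1,n] (n - i) @ [i])" by (simp add: a_word_def)
  have 2: "Meq n (wpow [n] i @ (wpow [1,n] (n - i) @ [i])) (wpow [n] i @ ([i + (n-i)] @ wpow [n] (n - i)))"
    using a by (intro Meq_app[OF Meq.refl] Lmain) auto
  have ee: "i + (n-i) = n" "i + Suc (n - i) = Suc n" using a by auto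
  have 3: "wpow [n] i @ ([i + (n-i)] @ wpow [n] (n - i)) = Delta n"
  proof -
    have "wpow [n] i @ ([i + (n-i)] @ wpow [n] (n - i)) = replicate i n @ replicate (Suc (n - i)) n"
      unfolding ee(1) wpow_single by simp
    also have "\<dots> = replicate (i + Suc (n - i)) n" by (rule replicate_add[symmetric])
    finally show ?thesis unfolding ee(2) Delta_def wpow_single by simp
  qed
  show ?thesis unfolding 1 using 2 unfolding 3 .
qed

lemma a_words: "1 \<le> i \<Longrightarrow> i \<le> n \<Longrightarrow> a_word n i \<in> words n"
  by (auto simp: a_word_def words_def wpow_def split: if_splits)

lemma central1: "1 \<le> c \<Longrightarrow> c \<le> n \<Longrightarrow> Meq n (Delta n @ [c]) ([c] @ Delta n)"
proof -
  assume a: "1 \<le> c" "c \<le> n"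
  have 1: "Meq n (Delta n @ [c]) (([c] @ a_word n c) @ [c])"
    by (rule Meq_app[OF Meq.sym[OF part2a[OF a]] Meq.refl])
  have 2: "Meq n ([c] @ (a_word n c @ [c])) ([c] @ Delta n)"
    by (rule Meq_app[OF Meq.refl part2b[OF a]])
  show ?thesis using Meq.trans[OF 1 2[unfolded append_assoc[symmetric]]] .
qed

lemma central: "w \<in> words n \<Longrightarrow> Meq n (Delta n @ w) (w @ Delta n)"
proof (induction w)
  case Nil then show ?case by (simp add: Meq.refl)
next
  case (Cons c w)
  have c: "1 \<le> c" "c \<le> n" "w \<in> words n" using Cons.prems by (auto simp: words_def)
  have 1: "Meq n ((Delta n @ [c]) @ w) (([c] @ Delta n) @ w)" by (rule Meq_app[OF central1[OF c(1,2)] Meq.refl])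
  have 2: "Meq n ([c] @ (Delta n @ w)) ([c] @ (w @ Delta n))" by (rule Meq_app[OF Meq.refl Cons.IH[OF c(3)]])
  show ?case using Meq.trans[OF 1 2[unfolded append_assoc[symmetric]]] by simp
qed



definition md :: "nat \<Rightarrow> bool \<Rightarrow> nat" where "md n t = (if t then n else Suc n)"

fun act1 :: "nat \<Rightarrow> bool \<Rightarrow> nat \<Rightarrow> (bool \<times> nat) list \<Rightarrow> (bool \<times> nat) list" where
  "act1 n t k [] = (if k mod md n t = 0 then [] else [(t, k mod md n t)])"
| "act1 n t k ((s,e)#L) = (if k mod md n t = 0 then (s,e)#L
     else if s = t then (if (e + k) mod md n t = 0 then L else (t, (e + k) mod md n t)#L)
     else (t, k mod md n t)#(s,e)#L)"

fun wfr :: "nat \<Rightarrow> (bool \<times> nat) list \<Rightarrow> bool" where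
  "wfr n [] = True"
| "wfr n [(t,e)] = (0 < e \<and> e < md n t)"
| "wfr n ((t,e)#(s,f)#L) = (0 < e \<and> e < md n t \<and> t \<noteq> s \<and> wfr n ((s,f)#L))"

lemma wfr_tl: "wfr n (x#L) \<Longrightarrow> wfr n L"
  by (cases x; cases L) auto

lemma md_pos: "0 < n \<Longrightarrow> 0 < md n t" by (simp add: md_def)

lemma wfr_act1: "0 < n \<Longrightarrow> wfr n L \<Longrightarrow> wfr n (act1 n t k L)"
proof (cases L)
  case Nil
  assume "0 < n" then show ?thesis using Nil md_pos[of n t] by auto
next
  case (Cons x L')
  assume n: "0 < n" and w: "wfr n L"
  obtain s e where x: "x = (s,e)" by (cases x)
  have w': "wfr n L'" using w Cons wfr_tl by blast
  have hd: "L' \<noteq> [] \<Longrightarrow> fst (hd L') \<noteq> s" using w Cons x by (cases L') auto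
  have mp: "0 < md n t" using md_pos[OF n] .
  show ?thesis
  proof (cases L')
    case Nil then show ?thesis using Cons x w mp by (auto)
  next
    case (Cons y L'')
    obtain s2 e2 where y: "y = (s2,e2)" by (cases y)
    show ?thesis using Cons \<open>L = x # L'\<close> x y w mp hd by auto
  qed
qed

lemma act1_0: "k mod md n t = 0 \<Longrightarrow> act1 n t k L = L"
  by (cases L) auto

lemma act1_mod: "act1 n t k L = act1 n t (k mod md n t) L"
proof (cases L)
  case Nil then show ?thesis by simp
next
  case (Cons x L')
  obtain s e where "x = (s,e)" by (cases x)
  then show ?thesis using Cons by (simp add: mod_add_right_eq)
qed

lemma act1_comp_lt:
  assumes n: "0 < n" and w: "wfr n L" and am: "a < md n t" and cm: "c < md n t"
  shows "act1 n t a (act1 n t c L) = act1 n t (a + c) L"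
proof -
  have mp: "0 < (md n t)" using md_pos[OF n] by simp
  have am': "a < (md n t)" "c < (md n t)" using am cm by auto
  show ?thesis
  proof (cases "a = 0 \<or> c = 0")
    case True
    then show ?thesis by (auto simp: act1_0)
  next
    case False
    then have a0: "a mod (md n t) = a" "a \<noteq> 0" "c mod (md n t) = c" "c \<noteq> 0" using am' by auto
    show ?thesis
    proof (cases L)
      case Nil
      then show ?thesis using a0 by (simp add: add.commute mod_add_left_eq)
    next
      case (Cons x L')
      obtain s e where x: "x = (s,e)" by (cases x)
      have wx: "wfr n ((s,e)#L')" using w Cons x by simp
      have e: "0 < e \<and> e < md n s"
      proof (cases L')
        case Nil then show ?thesis using wx by simp
      next
        case (Cons y L2)
        obtain a b where y: "y = (a,b)" by (cases y)
        have "wfr n ((s,e)#(a,b)#L2)" using wx unfolding Cons y .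
        then show ?thesis using wfr.simps(3)[of n s e a b L2] by blast
      qed
      have hd: "act1 n t k L' = (if k mod (md n t) = 0 then L' else (t, k mod (md n t)) # L')" if "s = t" for k
      proof (cases L')
        case Nil then show ?thesis by auto
      next
        case (Cons y L'')
        obtain s2 e2 where y: "y = (s2,e2)" by (cases y)
        have "s2 \<noteq> s" using w \<open>L = x # L'\<close> x Cons y by simp
        then show ?thesis using that Cons y by auto
      qed
      show ?thesis
      proof (cases "s = t")
        case False
        then show ?thesis using Cons x a0
          by (simp add: add.commute mod_add_left_eq)
      next
        case True
        have em: "e < (md n t)" using e True by auto
        have Lx: "L = (t,e) # L'" using Cons x True by simp
        have ex: "\<And>k. act1 n t k L = (if k mod md n t = 0 then L
            else if (e + k) mod md n t = 0 then L' else (t, (e + k) mod md n t) # L')"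
          unfolding Lx by simp
        show ?thesis
        proof (cases "(e + c) mod (md n t) = 0")
          case ec: True
          have l1: "act1 n t c L = L'" using ex[of c] ec a0 by simp
          have l2: "act1 n t a L' = (t, a) # L'" using hd[OF True, of a] a0 by simp
          have r: "(e + (a + c)) mod (md n t) = a"
          proof -
            have "(e + (a + c)) mod (md n t) = ((e + c) + a) mod (md n t)" by (simp add: add_ac)
            also have "\<dots> = ((e + c) mod (md n t) + a) mod (md n t)" by (simp add: mod_add_left_eq)
            also have "\<dots> = a" using ec a0 by simp
            finally show ?thesis .
          qed
          show ?thesis
          proof (cases "(a + c) mod (md n t) = 0")
            case True
            have "(e + (a + c)) mod (md n t) = e" using True em mod_add_right_eq[of e "a + c" "md n t"] by simp
            then have "a = e" using r by simp
            then show ?thesis unfolding l1 l2 ex[of "a+c"] using True Lx by simp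
          next
            case False
            then show ?thesis unfolding l1 l2 ex[of "a+c"] using r a0 by simp
          qed
        next
          case ec: False
          define d where "d = (e + c) mod (md n t)"
          have l1: "act1 n t c L = (t, d) # L'" using ex[of c] ec a0 d_def by simp
          have l2: "act1 n t a ((t, d) # L') = (if (d + a) mod md n t = 0 then L' else (t, (d + a) mod md n t) # L')"
            using a0 by simp
          have da: "(d + a) mod (md n t) = (e + (a + c)) mod (md n t)"
            unfolding d_def using mod_add_left_eq[of "e + c" "md n t" a] by (simp add: add_ac)
          show ?thesis
          proof (cases "(a + c) mod (md n t) = 0")
            case True
            have "(e + (a + c)) mod (md n t) = e" using True em mod_add_right_eq[of e "a + c" "md n t"] by simp
            then have "(d + a) mod (md n t) = e" using da by simp
            then show ?thesis unfolding l1 l2 ex[of "a+c"] using True e Lx by simp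
          next
            case False
            then show ?thesis unfolding l1 l2 ex[of "a+c"] using da by simp
          qed
        qed
      qed
    qed
  qed
qed

lemma act1_comp: "0 < n \<Longrightarrow> wfr n L \<Longrightarrow> act1 n t a (act1 n t c L) = act1 n t (a + c) L"
proof -
  assume n: "0 < n" and w: "wfr n L"
  define m where "m = md n t"
  have mp: "0 < m" using md_pos[OF n] m_def by simp
  have "act1 n t a (act1 n t c L) = act1 n t (a mod m) (act1 n t (c mod m) L)"
    using act1_mod m_def by metis
  also have "\<dots> = act1 n t (a mod m + c mod m) L"
    using act1_comp_lt[OF n w] mp m_def by simp
  also have "\<dots> = act1 n t (a + c) L"
    using act1_mod[of n t "a mod m + c mod m"] act1_mod[of n t "a + c"] m_def by (simp add: mod_add_eq)
  finally show ?thesis .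
qed

definition actc :: "nat \<Rightarrow> nat \<Rightarrow> (bool \<times> nat) list \<Rightarrow> (bool \<times> nat) list" where
  "actc n c L = act1 n False (Suc n - c) (act1 n True c L)"

definition F :: "nat \<Rightarrow> nat list \<Rightarrow> (bool \<times> nat) list \<Rightarrow> (bool \<times> nat) list" where
  "F n u L = fold (actc n) u L"

lemma F_Nil[simp]: "F n [] L = L" by (simp add: F_def)
lemma F_append: "F n (u @ v) L = F n v (F n u L)" by (simp add: F_def)
lemma F_Cons: "F n (c # v) L = F n v (actc n c L)" by (simp add: F_def)

lemma wfr_actc: "0 < n \<Longrightarrow> wfr n L \<Longrightarrow> wfr n (actc n c L)"
  unfolding actc_def by (intro wfr_act1) (auto intro: wfr_act1)

lemma wfr_F: "0 < n \<Longrightarrow> wfr n L \<Longrightarrow> wfr n (F n u L)"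
  by (induction u arbitrary: L) (auto simp: F_Cons intro: wfr_actc)

lemma actc_n: "0 < n \<Longrightarrow> actc n n L = act1 n False 1 L"
  unfolding actc_def by (simp add: act1_0 md_def)

lemma rel_F: "0 < n \<Longrightarrow> 1 \<le> i \<Longrightarrow> i \<le> n - 1 \<Longrightarrow> wfr n L \<Longrightarrow> F n [1, n, i] L = F n [Suc i, n] L"
proof -
  assume n: "0 < n" and i: "1 \<le> i" "i \<le> n - 1" and w: "wfr n L"
  have w1: "wfr n (act1 n True 1 L)" using wfr_act1[OF n w] .
  have w2: "wfr n (act1 n True (Suc i) L)" using wfr_act1[OF n w] .
  have "F n [1, n, i] L = actc n i (act1 n False 1 (act1 n False n (act1 n True 1 L)))"
    by (simp add: F_def actc_n[OF n]) (simp add: actc_def)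
  also have "\<dots> = actc n i (act1 n True 1 L)"
    using act1_comp[OF n w1, of False 1 n] by (simp add: act1_0 md_def)
  also have "\<dots> = act1 n False (Suc n - i) (act1 n True (Suc i) L)"
    unfolding actc_def using act1_comp[OF n w, of True i 1] by simp
  also have "\<dots> = act1 n False 1 (act1 n False (n - i) (act1 n True (Suc i) L))"
  proof -
    have "Suc n - i = 1 + (n - i)" using i by simp
    then show ?thesis using act1_comp[OF n w2, of False 1 "n - i"] by simp
  qed
  also have "\<dots> = F n [Suc i, n] L"
    by (simp add: F_def actc_n[OF n]) (simp add: actc_def)
  finally show ?thesis .
qed

lemma Meq_F: "Meq n u v \<Longrightarrow> 0 < n \<Longrightarrow> wfr n L \<Longrightarrow> F n u L = F n v L"
proof (induction arbitrary: L rule: Meq.induct)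
  case (step l r u w)
  from step(1) obtain i where i: "1 \<le> i" "i \<le> n - 1" "l = [1, n, i]" "r = [Suc i, n]"
    by (cases rule: Mrel.cases) auto
  have e: "\<And>x. F n (u @ x @ w) L = F n w (F n x (F n u L))" by (simp add: F_append)
  show ?case unfolding e using rel_F[OF step(2) i(1,2) wfr_F[OF step(2) step(3)]] i(3,4) by simp
qed auto

lemma Meq_sum: "Meq n u v \<Longrightarrow> sum_list u = sum_list v"
proof (induction rule: Meq.induct)
  case (step l r u w)
  then show ?case by (cases rule: Mrel.cases) auto
qed auto

lemma F_rep: "0 < n \<Longrightarrow> wfr n L \<Longrightarrow> F n (replicate k n) L = act1 n False k L"
proof (induction k arbitrary: L)
  case 0 then show ?case by (simp add: act1_0)
next
  case (Suc k)
  have "F n (replicate (Suc k) n) L = F n (replicate k n) (act1 n False 1 L)"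
    by (simp add: F_Cons actc_n[OF Suc.prems(1)])
  also have "\<dots> = act1 n False k (act1 n False 1 L)" using Suc wfr_act1 by blast
  also have "\<dots> = act1 n False (Suc k) L" using act1_comp[OF Suc.prems] by simp
  finally show ?case .
qed

lemma F_Delta: "0 < n \<Longrightarrow> wfr n L \<Longrightarrow> F n (replicate (Suc n) n) L = L"
proof -
  assume a: "0 < n" "wfr n L"
  have "Suc n mod md n False = 0" by (simp add: md_def)
  then show ?thesis using F_rep[OF a, of "Suc n"] act1_0 by simp
qed

lemma act1_inj: "0 < n \<Longrightarrow> wfr n L1 \<Longrightarrow> wfr n L2 \<Longrightarrow> act1 n t k L1 = act1 n t k L2 \<Longrightarrow> L1 = L2"
proof -
  assume n: "0 < n" and w: "wfr n L1" "wfr n L2" and e: "act1 n t k L1 = act1 n t k L2"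
  define k' where "k' = md n t - k mod md n t"
  have z: "(k' + k) mod md n t = 0" unfolding k'_def using md_pos[OF n, of t]
    by (metis add.commute le_add_diff_inverse2 mod_add_right_eq mod_le_divisor mod_self)
  have "act1 n t k' (act1 n t k L1) = act1 n t k' (act1 n t k L2)" using e by simp
  then show ?thesis using act1_comp[OF n w(1)] act1_comp[OF n w(2)] act1_0[OF z] by simp
qed

lemma actc_inj: "0 < n \<Longrightarrow> wfr n L1 \<Longrightarrow> wfr n L2 \<Longrightarrow> actc n c L1 = actc n c L2 \<Longrightarrow> L1 = L2"
  unfolding actc_def by (meson act1_inj wfr_act1)

lemma F_inj: "0 < n \<Longrightarrow> wfr n L1 \<Longrightarrow> wfr n L2 \<Longrightarrow> F n u L1 = F n u L2 \<Longrightarrow> L1 = L2"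
proof (induction u arbitrary: L1 L2)
  case Nil then show ?case by simp
next
  case (Cons c u)
  then show ?case by (simp add: F_Cons) (meson actc_inj wfr_actc)
qed



definition spot1 :: "nat \<Rightarrow> nat list \<Rightarrow> bool" where
  "spot1 n u = (\<exists>p q. u = p @ replicate (Suc n) n @ q)"
definition spot2 :: "nat \<Rightarrow> nat list \<Rightarrow> bool" where
  "spot2 n u = (\<exists>p q i j. 1 \<le> i \<and> i < n \<and> 1 \<le> j \<and> j < n \<and> u = p @ [i] @ replicate i n @ [j] @ q)"

lemma spot1_snoc: "spot1 n u \<Longrightarrow> spot1 n (u @ [c])"
  unfolding spot1_def by (metis append.assoc)
lemma spot2_snoc: "spot2 n u \<Longrightarrow> spot2 n (u @ [c])"
  unfolding spot2_def by (metis append.assoc)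

lemma mod_small2: "x < 2 * Suc n \<Longrightarrow> x mod Suc n = (if x < Suc n then x else x - Suc n)"
  by (simp add: le_mod_geq)

lemma Inv: "0 < n \<Longrightarrow> u \<in> lists {1..n} \<Longrightarrow> \<not> spot1 n u \<Longrightarrow> \<not> spot2 n u \<Longrightarrow>
  (\<exists>k. k \<le> n \<and> u = replicate k n \<and> F n u [] = (if k = 0 then [] else [(False,k)])) \<or>
  (\<exists>p i k L. 1 \<le> i \<and> i < n \<and> k \<le> n \<and> u = p @ [i] @ replicate k n \<and>
     F n u [] = (if k = i then (True,i)#L else (False, (k + Suc n - i) mod Suc n)#(True,i)#L))"
proof (induction u rule: rev_induct)
  case Nil then show ?case by auto
next
  case (snoc c u)
  have n: "0 < n" by fact
  have u: "u \<in> lists {1..n}" "\<not> spot1 n u" "\<not> spot2 n u"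
    using snoc.prems spot1_snoc spot2_snoc by auto
  have c: "1 \<le> c" "c \<le> n" using snoc.prems by auto
  have Fs: "F n (u @ [c]) [] = actc n c (F n u [])" by (simp add: F_append F_def)
  from snoc.IH[OF n u] show ?case
  proof
    assume "\<exists>k. k \<le> n \<and> u = replicate k n \<and> F n u [] = (if k = 0 then [] else [(False,k)])"
    then obtain k where k: "k \<le> n" "u = replicate k n" "F n u [] = (if k = 0 then [] else [(False,k)])" by blast
    show ?thesis
    proof (cases "c = n")
      case True
      have "k \<noteq> n"
      proof
        assume "k = n"
        then have "u @ [c] = [] @ replicate (Suc n) n @ []" using k True by (simp add: replicate_append_same)
        then show False using snoc.prems(3) unfolding spot1_def by blast
      qed
      then have k1: "Suc k \<le> n" using k by simp
      have "F n (u @ [c]) [] = (if Suc k = 0 then [] else [(False, Suc k)])"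
        using Fs True k k1 n by (auto simp: actc_n md_def)
      moreover have "u @ [c] = replicate (Suc k) n" using k True by (simp add: replicate_append_same)
      ultimately show ?thesis using k1 by blast
    next
      case False
      then have cn: "c < n" using c by simp
      have "F n (u @ [c]) [] = (False, (0 + Suc n - c) mod Suc n) # (True, c) # F n u []"
        using Fs k cn c by (auto simp: actc_def md_def)
      then show ?thesis using c cn by (intro disjI2 exI[of _ u] exI[of _ c] exI[of _ 0] exI[of _ "F n u []"]) auto
    qed
  next
    assume "\<exists>p i k L. 1 \<le> i \<and> i < n \<and> k \<le> n \<and> u = p @ [i] @ replicate k n \<and>
     F n u [] = (if k = i then (True,i)#L else (False, (k + Suc n - i) mod Suc n)#(True,i)#L)"
    then obtain p i k L where k: "1 \<le> i" "i < n" "k \<le> n" "u = p @ [i] @ replicate k n"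
      "F n u [] = (if k = i then (True,i)#L else (False, (k + Suc n - i) mod Suc n)#(True,i)#L)" by blast
    show ?thesis
    proof (cases "c = n")
      case True
      have "k \<noteq> n"
      proof
        assume "k = n"
        then have "u @ [c] = (p @ [i]) @ replicate (Suc n) n @ []" using k True by (simp add: replicate_append_same)
        then show False using snoc.prems(3) unfolding spot1_def by blast
      qed
      then have k1: "Suc k \<le> n" using k by simp
      have e1: "u @ [c] = p @ [i] @ replicate (Suc k) n" using k True by (simp add: replicate_append_same)
      have "F n (u @ [c]) [] = (if Suc k = i then (True,i)#L else (False, (Suc k + Suc n - i) mod Suc n)#(True,i)#L)"
      proof (cases "k = i")
        case True
        have s2: "Suc (Suc n) mod Suc n = Suc 0" using n by (simp add: le_mod_geq)
        then show ?thesis using Fs \<open>c = n\<close> k n True by (auto simp: actc_n md_def)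
      next
        case False
        have a1: "(k + Suc n - i) mod Suc n = (if i \<le> k then k - i else k + Suc n - i)"
          using k by (subst mod_small2) auto
        have a2: "((k + Suc n - i) mod Suc n + 1) mod Suc n = (if i \<le> Suc k then Suc k - i else Suc k + Suc n - i)"
          using k k1 False unfolding a1 by (auto simp: mod_small2)
        have a3: "(Suc k + Suc n - i) mod Suc n = (if i \<le> Suc k then Suc k - i else Suc k + Suc n - i)"
          using k k1 by (subst mod_small2) auto
        show ?thesis using Fs \<open>c = n\<close> k n False a2 a3 k1 by (auto simp: actc_n md_def)
      qed
      then show ?thesis using e1 k k1 by blast
    next
      case False
      then have cn: "c < n" using c by simp
      have "k \<noteq> i"
      proof
        assume "k = i"
        then have "u @ [c] = p @ [i] @ replicate i n @ [c] @ []" using k by simp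
        then show False using snoc.prems(4) k c cn unfolding spot2_def by blast
      qed
      then have "F n (u @ [c]) [] = (False, (0 + Suc n - c) mod Suc n) # (True, c) # F n u []"
        using Fs k cn c by (auto simp: actc_def md_def)
      then show ?thesis using c cn by (intro disjI2 exI[of _ u] exI[of _ c] exI[of _ 0] exI[of _ "F n u []"]) auto
    qed
  qed
qed


lemma Delta_rep: "Delta n = replicate (Suc n) n"
  by (simp add: Delta_def wpow_single)

lemma Red_lemma: "0 < n \<Longrightarrow> u \<in> lists {1..n} \<Longrightarrow> F n u [] = [] \<Longrightarrow>
  \<exists>m. Meq n u (replicate (Suc n * m) n)"
proof (induction "sum_list u + length (filter (\<lambda>x. x \<noteq> n) u)" arbitrary: u rule: less_induct)
  case less
  have n: "0 < n" by fact
  show ?case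
  proof (cases "spot1 n u")
    case True
    then obtain p q where u: "u = p @ replicate (Suc n) n @ q" unfolding spot1_def by blast
    have pq: "p @ q \<in> lists {1..n}" using less.prems u by auto
    have wp: "wfr n (F n p [])" using wfr_F[OF n] by simp
    have "F n u [] = F n q (F n (replicate (Suc n) n) (F n p []))" unfolding u by (simp only: F_append)
    then have "F n (p @ q) [] = []" using less.prems(3) F_Delta[OF n wp] by (simp add: F_append)
    moreover have "sum_list (p @ q) + length (filter (\<lambda>x. x \<noteq> n) (p @ q)) <
        sum_list u + length (filter (\<lambda>x. x \<noteq> n) u)" using u n by simp
    ultimately obtain m where m: "Meq n (p @ q) (replicate (Suc n * m) n)"
      using less.hyps[OF _ n pq] by blast
    have pw: "p \<in> words n" using less.prems u by (auto simp: words_def)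
    have "Meq n ((p @ Delta n) @ q) ((Delta n @ p) @ q)"
      by (rule Meq_app[OF Meq.sym[OF central[OF pw]] Meq.refl])
    moreover have "Meq n (Delta n @ (p @ q)) (Delta n @ replicate (Suc n * m) n)"
      by (rule Meq_app[OF Meq.refl m])
    moreover have "Delta n @ replicate (Suc n * m) n = replicate (Suc n * Suc m) n"
      by (simp add: Delta_rep replicate_add[symmetric])
    ultimately have "Meq n u (replicate (Suc n * Suc m) n)" using u Delta_rep
      by (metis Meq.trans append_assoc)
    then show ?thesis by blast
  next
    case ns1: False
    show ?thesis
    proof (cases "spot2 n u")
      case True
      then obtain p q i j where ij: "1 \<le> i" "i < n" "1 \<le> j" "j < n" and u: "u = p @ [i] @ replicate i n @ [j] @ q"
        unfolding spot2_def by blast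
      obtain x k where xk: "Meq n ([i] @ replicate i n @ [j]) ([x] @ replicate k n)" "1 \<le> x" "x \<le> n"
      proof (cases "i + j \<le> n")
        case True
        show ?thesis using R1[of i j n] ij True that[of "i+j" i] by (auto simp: wpow_single)
      next
        case False
        show ?thesis using R2[of i n j] ij False that[of "i+j-n" "Suc i"] by (auto simp: wpow_single)
      qed
      define u' where "u' = p @ [x] @ replicate k n @ q"
      have uu: "Meq n u u'" unfolding u u'_def using Meq_ctx[OF xk(1), of p q] by simp
      have u'w: "u' \<in> lists {1..n}" using less.prems u xk unfolding u'_def by auto
      have "F n u' [] = []" using Meq_F[OF uu n] less.prems(3) by simp
      moreover have "sum_list u' = sum_list u" using Meq_sum[OF uu] by simp
      moreover have "length (filter (\<lambda>x. x \<noteq> n) u') < length (filter (\<lambda>x. x \<noteq> n) u)"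
        unfolding u u'_def using ij by auto
      ultimately obtain m where "Meq n u' (replicate (Suc n * m) n)"
        using less.hyps[OF _ n u'w] by (metis add_less_mono1 nat_add_left_cancel_less)
      then show ?thesis using uu Meq.trans by blast
    next
      case ns2: False
      from Inv[OF n less.prems(2) ns1 ns2] show ?thesis
      proof
        assume "\<exists>k. k \<le> n \<and> u = replicate k n \<and> F n u [] = (if k = 0 then [] else [(False,k)])"
        then obtain k where "u = replicate k n" "F n u [] = (if k = 0 then [] else [(False,k)])" by blast
        then have "u = replicate (Suc n * 0) n" using less.prems(3) by (cases "k = 0") auto
        then show ?thesis using Meq.refl by blast
      next
        assume "\<exists>p i k L. 1 \<le> i \<and> i < n \<and> k \<le> n \<and> u = p @ [i] @ replicate k n \<and>
           F n u [] = (if k = i then (True,i)#L else (False, (k + Suc n - i) mod Suc n)#(True,i)#L)"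
        then show ?thesis using less.prems(3) by (auto split: if_splits)
      qed
    qed
  qed
qed

lemma part3: "1 \<le> n \<Longrightarrow> a \<in> words n \<Longrightarrow> b \<in> words n \<Longrightarrow> Meq n (a @ b) (Delta n) \<Longrightarrow> Meq n (b @ a) (Delta n)"
proof -
  assume n1: "1 \<le> n" and a: "a \<in> words n" and b: "b \<in> words n" and ab: "Meq n (a @ b) (Delta n)"
  have n: "0 < n" using n1 by simp
  have idab: "F n (a @ b) L = L" if "wfr n L" for L
    using Meq_F[OF ab n that] F_Delta[OF n that] by (simp add: Delta_rep)
  have wb: "wfr n (F n b [])" "wfr n (F n (b @ a) [])" using wfr_F[OF n] by auto
  have "F n b (F n (b @ a) []) = F n b []"
    using idab[OF wb(1)] by (simp add: F_append)
  then have Fba: "F n (b @ a) [] = []" using F_inj[OF n wb(2)] by simp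
  have bal: "b @ a \<in> lists {1..n}" using a b by (auto simp: words_def)
  obtain m where m: "Meq n (b @ a) (replicate (Suc n * m) n)" using Red_lemma[OF n bal Fba] by blast
  have "sum_list (b @ a) = sum_list (Delta n)" using Meq_sum[OF ab] by (simp add: add.commute)
  then have "Suc n * m * n = Suc n * n" using Meq_sum[OF m] by (simp add: Delta_rep sum_list_replicate)
  then have "(Suc n * n) * m = (Suc n * n) * 1" by (metis mult.assoc mult.commute mult.right_neutral)
  moreover have X0: "Suc n * n \<noteq> 0" using n by simp
  ultimately have "m = 1" using mult_left_cancel by blast
  then show ?thesis using m by (simp add: Delta_rep)
qed

theorem proposition4p14:
  fixes n :: nat
  assumes "n \<ge> 1"
  shows "Meq n ([1] @ wpow [n, 1] (n - 1)) (wpow [n] n)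
    \<and> Meq n (Delta n) (wpow [1, n] n)
    \<and> Meq n (Delta n) (wpow [n, 1] n)
    \<and> (\<forall>i. 1 \<le> i \<and> i \<le> n \<longrightarrow>
          Meq n ([i] @ a_word n i) (Delta n) \<and> Meq n (a_word n i @ [i]) (Delta n))
    \<and> (\<forall>i. 1 \<le> i \<and> i \<le> n \<longrightarrow>
          (\<exists>c \<in> words n. Meq n ([i] @ c) (Delta n))
        \<and> (\<exists>c \<in> words n. Meq n (c @ [i]) (Delta n)))
    \<and> (\<forall>w \<in> words n. Meq n (Delta n @ w) (w @ Delta n))
    \<and> (\<forall>a \<in> words n. \<forall>b \<in> words n.
          Meq n (a @ b) (Delta n) \<longrightarrow> Meq n (b @ a) (Delta n))"
proof (intro conjI allI impI ballI)
  show "Meq n ([1] @ wpow [n, 1] (n - 1)) (wpow [n] n)" using assms by (rule part1)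
  show "Meq n (Delta n) (wpow [1, n] n)" using assms by (rule part1b)
  show "Meq n (Delta n) (wpow [n, 1] n)" using assms by (rule part1c)
  fix i assume i: "1 \<le> i \<and> i \<le> n"
  then show "Meq n ([i] @ a_word n i) (Delta n)" using part2a[of i n] by blast
  from i show "Meq n (a_word n i @ [i]) (Delta n)" using part2b[of i n] by blast
  from i show "\<exists>c \<in> words n. Meq n ([i] @ c) (Delta n)" using part2a a_words by blast
  from i show "\<exists>c \<in> words n. Meq n (c @ [i]) (Delta n)" using part2b a_words by blast
next
  fix w assume "w \<in> words n" then show "Meq n (Delta n @ w) (w @ Delta n)" by (rule central)
next
  fix a b assume "a \<in> words n" "b \<in> words n" "Meq n (a @ b) (Delta n)"
  then show "Meq n (b @ a) (Delta n)" using part3 assms by blast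
qed

end
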